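(* Let $X$ be a real Hilbert space and $Y$ a real Banach space. Let $F\colon X\to Y$ be a continuous function and let $L>0$, and suppose that for every $n\ge 1$, all $x_1,\ldots,x_n \in X$ and all $\lambda_1,\ldots,\lambda_n \ge 0$ with $\sum_{i=1}^n \lambda_i = 1$, $$\Big\| F\Big(\sum_{i=1}^n \lambda_i x_i\Big) - \sum_{i=1}^n \lambda_i F(x_i)\Big\| \le \frac{L}{2}\sum_{1\le i<j\le n} \lambda_i\lambda_j \|x_i - x_j\|^2.$$ For each $y^*\in Y^*$ define $\phi_{y^*}\colon X\to\mathbb{R}$ by $\phi_{y^*}(x) = y^*(F(x))$. Then for each $y^*\in Y^*$ with $\|y^*\|\le 1$, the function $\phi_{y^*}$ is Fréchet differentiable everywhere on $X$ and its gradient $\nabla\phi_{y^*}\colon X\to X$ is $L$-Lipschitz continuous.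
   Context: $Y^*$ denotes the (continuous) dual space of $Y$ with the dual norm. The gradient $\nabla\phi_{y^*}(x)\in X$ is the Riesz representative of the Fréchet derivative of $\phi_{y^*}$ at $x$. *)

theory Defs
  imports "HOL-Analysis.Analysis"
begin

end

theory Submission
  imports Defs "HOL-Analysis.Analysis"
begin

lemma quad_zero:
  fixes a b :: real
  assumes "\<And>t. t * a + t^2 * b \<ge> 0" "b \<ge> 0"
  shows "a = 0"
proof (rule ccontr)
  assume "a \<noteq> 0"
  define c where "c = b + 1"
  have c: "c > 0" using assms(2) c_def by simp
  define t where "t = - a / c"
  have "t * c = - a" using c by (simp add: t_def)
  have "c^2 * (t * a + t^2 * b) = (t*c) * a * c + (t*c)^2 * b" by (simp add: power2_eq_square algebra_simps)
  also have "\<dots> = - (a^2)" using \<open>t * c = - a\<close> by (simp add: c_def power2_eq_square algebra_simps)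
  finally have "c^2 * (t * a + t^2 * b) < 0" using \<open>a \<noteq> 0\<close> by simp
  moreover have "c^2 * (t * a + t^2 * b) \<ge> 0" using assms(1)[of t] c by simp
  ultimately show False by linarith
qed


lemma limit_lemma:
  fixes f :: "real \<Rightarrow> real"
  assumes C: "C \<ge> 0" and H: "\<And>s t. 0 < s \<Longrightarrow> s \<le> t \<Longrightarrow> \<bar>f s - f t\<bar> \<le> C * t"
  shows "\<exists>l. \<forall>t>0. \<bar>l - f t\<bar> \<le> C * t"
proof -
  define u where "u = (\<lambda>n::nat. f (1 / (real n + 1)))"
  have H2: "\<bar>f s - f t\<bar> \<le> C * max s t" if "s > 0" "t > 0" for s t
  proof (cases "s \<le> t")
    case True then show ?thesis using H[of s t] that by (simp add: max_def)
  next
    case False then show ?thesis using H[of t s] that by (simp add: max_def abs_minus_commute)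
  qed
  have "Cauchy u"
  proof (rule metric_CauchyI)
    fix e :: real assume e: "e > 0"
    obtain N :: nat where N: "C / e < real N" using reals_Archimedean2 by blast
    have CN: "C * (1 / (real N + 1)) < e"
      using N e by (simp add: field_simps)
    show "\<exists>M. \<forall>m\<ge>M. \<forall>n\<ge>M. dist (u m) (u n) < e"
    proof (intro exI allI impI)
      fix m n assume mn: "N \<le> m" "N \<le> n"
      have a: "1 / (real m + 1) \<le> 1 / (real N + 1)" using mn by (simp add: frac_le)
      have b: "1 / (real n + 1) \<le> 1 / (real N + 1)" using mn by (simp add: frac_le)
      have "dist (u m) (u n) \<le> C * max (1 / (real m + 1)) (1 / (real n + 1))"
        unfolding u_def dist_real_def by (rule H2) auto
      also have "\<dots> \<le> C * (1 / (real N + 1))"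
        using a b C by (intro mult_left_mono) auto
      finally show "dist (u m) (u n) < e" using CN by linarith
    qed
  qed
  then obtain l where l: "u \<longlonglongrightarrow> l" using Cauchy_convergent_iff convergent_def by blast
  show ?thesis
  proof (intro exI allI impI)
    fix t :: real assume t: "t > 0"
    obtain N :: nat where N: "1 / t < real N" using reals_Archimedean2 by blast
    have ev: "\<forall>\<^sub>F n in sequentially. \<bar>u n - f t\<bar> \<le> C * t"
      unfolding eventually_sequentially
    proof (intro exI allI impI)
      fix n assume n: "N \<le> n"
      have "1 / t < real n + 1" using N n by linarith
      then have le: "1 / (real n + 1) \<le> t" using t by (simp add: field_simps)
      show "\<bar>u n - f t\<bar> \<le> C * t" unfolding u_def by (rule H) (use le in auto)
    qed
    have "((\<lambda>n. \<bar>u n - f t\<bar>) \<longlongrightarrow> \<bar>l - f t\<bar>) sequentially"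
      by (intro tendsto_intros l)
    then show "\<bar>l - f t\<bar> \<le> C * t"
      using ev by (intro tendsto_le[OF _ tendsto_const]) auto
  qed
qed

lemma zero_if_small:
  fixes a K :: real
  assumes "\<And>t. t > 0 \<Longrightarrow> \<bar>a\<bar> \<le> K * t"
  shows "a = 0"
proof (rule ccontr)
  assume "a \<noteq> 0"
  then have "\<bar>a\<bar> > 0" by simp
  have K: "K > 0" using assms[of 1] \<open>\<bar>a\<bar> > 0\<close> by simp
  have "\<bar>a\<bar> \<le> K * (\<bar>a\<bar> / (2 * K))" using assms[of "\<bar>a\<bar> / (2*K)"] K \<open>\<bar>a\<bar> > 0\<close> by simp
  then show False using K \<open>\<bar>a\<bar> > 0\<close> by (simp add: field_simps)
qed



lemma riesz:
  fixes D :: "'a::{real_inner,complete_space} \<Rightarrow> real"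
  assumes bl: "bounded_linear D"
  shows "\<exists>v. \<forall>h. D h = v \<bullet> h"
proof -
  interpret D: bounded_linear D by (rule bl)
  obtain K where K: "\<And>h. \<bar>D h\<bar> \<le> norm h * K" "K > 0"
    using D.pos_bounded by auto
  define Q where "Q = (\<lambda>v::'a. (norm v)^2 / 2 - D v)"
  have Qlow: "Q v \<ge> - (K^2) / 2" for v
  proof -
    have "D v \<le> norm v * K" using K(1)[of v] by linarith
    moreover have "0 \<le> (norm v - K)^2" by simp
    ultimately show ?thesis unfolding Q_def by (simp add: power2_eq_square algebra_simps)
  qed
  define m where "m = Inf (range Q)"
  have bdd: "bdd_below (range Q)" using Qlow by (intro bdd_belowI2) auto
  have mle: "m \<le> Q w" for w unfolding m_def using bdd by (intro cInf_lower) auto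
  have "\<exists>v. Q v < m + inverse (real (Suc n))" for n
  proof -
    have "Inf (range Q) < m + inverse (real (Suc n))" unfolding m_def by simp
    then show ?thesis using cInf_lessD[of "range Q"] by blast
  qed
  then obtain vs where vs: "\<And>n. Q (vs n) < m + inverse (real (Suc n))" by metis
  have ident: "(norm (a - b))^2 = 4 * (Q a + Q b - 2 * Q ((1/2) *\<^sub>R (a + b)))" for a b
  proof -
    have "2 * D ((1/2) *\<^sub>R (a + b)) = D a + D b" by (simp add: D.scaleR D.add)
    moreover have "(norm (a - b))^2 = a \<bullet> a - 2 * (a \<bullet> b) + b \<bullet> b"
      by (simp add: power2_norm_eq_inner inner_diff inner_commute)
    moreover have "(norm ((1/2) *\<^sub>R (a + b)))^2 = (a \<bullet> a + 2 * (a \<bullet> b) + b \<bullet> b) / 4"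
      unfolding power2_norm_eq_inner by (simp add: inner_add inner_commute algebra_simps)
    moreover have "(norm a)^2 = a \<bullet> a" "(norm b)^2 = b \<bullet> b" by (simp_all add: power2_norm_eq_inner)
    ultimately show ?thesis unfolding Q_def by (simp add: algebra_simps)
  qed
  have bnd: "(norm (vs i - vs j))^2 \<le> 4 * (inverse (real (Suc i)) + inverse (real (Suc j)))" for i j
  proof -
    have "m \<le> Q ((1/2) *\<^sub>R (vs i + vs j))" by (rule mle)
    then show ?thesis using ident[of "vs i" "vs j"] vs[of i] vs[of j] by argo
  qed
  have "Cauchy vs"
  proof (rule metric_CauchyI)
    fix e :: real assume e: "e > 0"
    obtain N :: nat where N: "8 / e^2 < real N" using reals_Archimedean2 by blast
    have N2: "8 * inverse (real (Suc N)) < e^2"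
      using N e by (simp add: field_simps) (smt (verit) zero_less_power)
    show "\<exists>M. \<forall>m\<ge>M. \<forall>n\<ge>M. dist (vs m) (vs n) < e"
    proof (intro exI allI impI)
      fix i j assume ij: "N \<le> i" "N \<le> j"
      have a: "inverse (real (Suc i)) \<le> inverse (real (Suc N))" using ij by (simp add: le_imp_inverse_le)
      have b: "inverse (real (Suc j)) \<le> inverse (real (Suc N))" using ij by (simp add: le_imp_inverse_le)
      have "(dist (vs i) (vs j))^2 < e^2" 
        using bnd[of i j] a b N2 unfolding dist_norm by argo
      then show "dist (vs i) (vs j) < e" using e by (simp add: power_less_imp_less_base)
    qed
  qed
  then obtain v where v: "vs \<longlonglongrightarrow> v" using Cauchy_convergent_iff convergent_def by blast
  have Qv: "(\<lambda>n. Q (vs n)) \<longlonglongrightarrow> Q v" unfolding Q_def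
    by (intro tendsto_intros D.tendsto v) simp
  have Qmin: "Q v \<le> Q w" for w
  proof -
    have "(\<lambda>n. Q w + inverse (real (Suc n))) \<longlonglongrightarrow> Q w" by (rule LIMSEQ_inverse_real_of_nat_add)
    moreover have "\<forall>\<^sub>F n in sequentially. Q (vs n) \<le> Q w + inverse (real (Suc n))"
      using vs mle[of w] by (intro always_eventually allI) (smt (verit))
    ultimately show ?thesis using Qv by (intro tendsto_le[of sequentially]) auto
  qed
  have "D h = v \<bullet> h" for h
  proof -
    have "t * (v \<bullet> h - D h) + t^2 * ((norm h)^2 / 2) \<ge> 0" for t
    proof -
      have "Q v \<le> Q (v + t *\<^sub>R h)" by (rule Qmin)
      moreover have "(norm (v + t *\<^sub>R h))^2 = (norm v)^2 + 2 * t * (v \<bullet> h) + t^2 * (norm h)^2"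
        unfolding power2_norm_eq_inner by (simp add: inner_add inner_commute power2_eq_square algebra_simps)
      ultimately show ?thesis unfolding Q_def by (simp add: D.add D.scaleR algebra_simps)
    qed
    then have "v \<bullet> h - D h = 0" by (intro quad_zero[of _ "(norm h)^2 / 2"]) auto
    then show ?thesis by simp
  qed
  then show ?thesis by blast
qed


lemma coco:
  fixes H :: "'a::real_inner \<Rightarrow> real" and G :: "'a \<Rightarrow> 'a"
  assumes low: "\<And>x z. H x + G x \<bullet> (z - x) \<le> H z"
    and up: "\<And>y z. H z \<le> H y + G y \<bullet> (z - y) + L * (norm (z - y))^2"
    and L: "L > 0"
  shows "H y - H x - G x \<bullet> (y - x) \<ge> (norm (G y - G x))^2 / (4*L)"
proof -
  define \<Gamma> where "\<Gamma> = G y - G x"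
  define z where "z = y - (1 / (2*L)) *\<^sub>R \<Gamma>"
  have 1: "H x + G x \<bullet> (z - x) \<le> H z" by (rule low)
  have 2: "H z \<le> H y + G y \<bullet> (z - y) + L * (norm (z - y))^2" by (rule up)
  have zy: "z - y = - (1 / (2*L)) *\<^sub>R \<Gamma>" by (simp add: z_def)
  have 3: "G x \<bullet> (z - x) = G x \<bullet> (y - x) + G x \<bullet> (z - y)" by (simp add: inner_diff_right)
  have 4: "G y \<bullet> (z - y) - G x \<bullet> (z - y) = - (1 / (2*L)) * (norm \<Gamma>)^2"
  proof -
    have "G y \<bullet> (z - y) - G x \<bullet> (z - y) = \<Gamma> \<bullet> (z - y)" by (simp add: \<Gamma>_def inner_diff_left)
    also have "\<dots> = - (1 / (2*L)) * (\<Gamma> \<bullet> \<Gamma>)" unfolding zy by simp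
    finally show ?thesis by (simp add: power2_norm_eq_inner)
  qed
  have 5: "L * (norm (z - y))^2 = (1 / (4*L)) * (norm \<Gamma>)^2"
    unfolding zy using L by (simp add: power2_eq_square field_simps)
  have "H y - H x - G x \<bullet> (y - x) \<ge> (1 / (2*L)) * (norm \<Gamma>)^2 - (1 / (4*L)) * (norm \<Gamma>)^2"
    using 1 2 3 4 5 by linarith
  moreover have "(1 / (2*L)) * (norm \<Gamma>)^2 - (1 / (4*L)) * (norm \<Gamma>)^2 = (norm \<Gamma>)^2 / (4*L)"
    using L by (simp add: field_simps)
  ultimately show ?thesis unfolding \<Gamma>_def by simp
qed

lemma lip_from_quad:
  fixes \<phi> :: "'a::real_inner \<Rightarrow> real" and g :: "'a \<Rightarrow> 'a"
  assumes q: "\<And>x w. \<bar>\<phi> (x + w) - \<phi> x - g x \<bullet> w\<bar> \<le> L / 2 * (norm w)^2"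
    and L: "L > 0"
  shows "norm (g y - g x) \<le> L * norm (y - x)"
proof -
  define H where "H = (\<lambda>z. \<phi> z + L / 2 * (norm z)^2)"
  define G where "G = (\<lambda>z. g z + L *\<^sub>R z)"
  have key: "H z - H x - G x \<bullet> (z - x) = (\<phi> z - \<phi> x - g x \<bullet> (z - x)) + L / 2 * (norm (z - x))^2" for x z
  proof -
    have "(norm z)^2 - (norm x)^2 - 2 * (x \<bullet> (z - x)) = (norm (z - x))^2"
      unfolding power2_norm_eq_inner by (simp add: inner_diff_left inner_diff_right inner_commute)
    then have "L/2 * ((norm z)^2 - (norm x)^2 - 2 * (x \<bullet> (z - x))) = L/2 * (norm (z - x))^2" by simp
    then have e: "L/2 * (norm z)^2 - L/2 * (norm x)^2 - L * (x \<bullet> (z - x)) = L/2 * (norm (z - x))^2"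
      by (simp add: algebra_simps)
    have "G x \<bullet> (z - x) = g x \<bullet> (z - x) + L * (x \<bullet> (z - x))"
      unfolding G_def by (simp add: inner_add_left)
    then show ?thesis unfolding H_def using e by linarith
  qed
  have qz: "\<bar>\<phi> z - \<phi> x - g x \<bullet> (z - x)\<bar> \<le> L / 2 * (norm (z - x))^2" for x z
    using q[of x "z - x"] by simp
  have low: "H x + G x \<bullet> (z - x) \<le> H z" for x z
    using key[of z x] qz[of z x] by linarith
  have up: "H z \<le> H y + G y \<bullet> (z - y) + L * (norm (z - y))^2" for y z
    using key[of z y] qz[of z y] by linarith
  have c1: "H y - H x - G x \<bullet> (y - x) \<ge> (norm (G y - G x))^2 / (4*L)"
    by (rule coco[OF low up L])
  have c2: "H x - H y - G y \<bullet> (x - y) \<ge> (norm (G y - G x))^2 / (4*L)"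
    using coco[OF low up L, of x y] by (metis norm_minus_commute)
  have "norm (G x - G y) = norm (G y - G x)" by (rule norm_minus_commute)
  have "G x \<bullet> (y - x) + G y \<bullet> (x - y) = - ((G y - G x) \<bullet> (y - x))"
    by (simp add: inner_diff_left inner_diff_right algebra_simps)
  then have cc: "(G y - G x) \<bullet> (y - x) \<ge> (norm (G y - G x))^2 / (2*L)"
  proof -
    have "(norm (G y - G x))^2 / (4*L) + (norm (G y - G x))^2 / (4*L) \<le> (G y - G x) \<bullet> (y - x)"
      using c1 c2 \<open>norm (G x - G y) = norm (G y - G x)\<close> \<open>G x \<bullet> (y - x) + G y \<bullet> (x - y) = - ((G y - G x) \<bullet> (y - x))\<close>
      by linarith
    moreover have "(norm (G y - G x))^2 / (4*L) + (norm (G y - G x))^2 / (4*L) = (norm (G y - G x))^2 / (2*L)"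
      by simp
    ultimately show ?thesis by linarith
  qed
  define a where "a = g y - g x"
  define d where "d = y - x"
  have Gd: "G y - G x = a + L *\<^sub>R d" unfolding G_def a_def d_def by (simp add: algebra_simps)
  have e1: "(G y - G x) \<bullet> (y - x) = a \<bullet> d + L * (norm d)^2"
    unfolding Gd d_def[symmetric] power2_norm_eq_inner by (simp add: inner_add_left)
  have e2: "(norm (G y - G x))^2 = (norm a)^2 + 2 * L * (a \<bullet> d) + L^2 * (norm d)^2"
  proof -
    have "(a + L *\<^sub>R d) \<bullet> (a + L *\<^sub>R d) = a \<bullet> a + L * (a \<bullet> d) + L * (d \<bullet> a) + L * (L * (d \<bullet> d))"
      by (simp add: inner_add_left inner_add_right distrib_left)
    moreover have "d \<bullet> a = a \<bullet> d" by (rule inner_commute)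
    ultimately show ?thesis unfolding Gd power2_norm_eq_inner by (simp add: power2_eq_square algebra_simps)
  qed
  have "2 * L * (a \<bullet> d + L * (norm d)^2) \<ge> (norm a)^2 + 2 * L * (a \<bullet> d) + L^2 * (norm d)^2"
  proof -
    have "2 * L * ((norm (G y - G x))^2 / (2*L)) \<le> 2 * L * ((G y - G x) \<bullet> (y - x))"
      using cc L by (intro mult_left_mono) auto
    moreover have "2 * L * ((norm (G y - G x))^2 / (2*L)) = (norm (G y - G x))^2" using L by simp
    ultimately show ?thesis unfolding e1 e2 by linarith
  qed
  moreover have "2*L*(a \<bullet> d + L*(norm d)^2) = 2*L*(a \<bullet> d) + 2*L^2*(norm d)^2"
    by (simp add: power2_eq_square distrib_left)
  moreover have "(L * norm d)^2 = L^2 * (norm d)^2" by (rule power_mult_distrib)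
  ultimately have sq: "(norm a)^2 \<le> (L * norm d)^2" by linarith
  have nn: "0 \<le> L * norm d" using L by simp
  have "norm a \<le> L * norm d" by (rule power2_le_imp_le[OF sq nn])
  then show ?thesis unfolding a_def d_def .
qed


lemma deriv_exists:
  fixes \<phi> :: "'a::{real_inner,complete_space} \<Rightarrow> real"
  assumes cont: "continuous_on UNIV \<phi>" and L: "L > 0"
    and two: "\<And>a b \<mu>. 0 \<le> \<mu> \<Longrightarrow> \<mu> \<le> 1 \<Longrightarrow>
      \<bar>\<phi> (\<mu> *\<^sub>R a + (1 - \<mu>) *\<^sub>R b) - \<mu> * \<phi> a - (1 - \<mu>) * \<phi> b\<bar> \<le> L / 2 * (\<mu> * (1 - \<mu>) * (norm (a - b))^2)"
  shows "\<exists>v. \<forall>h. \<bar>\<phi> (x + h) - \<phi> x - v \<bullet> h\<bar> \<le> L / 2 * (norm h)^2"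
proof -
  define q where "q = (\<lambda>h t. (\<phi> (x + t *\<^sub>R h) - \<phi> x) / t)"
  have qA: "\<bar>q h s - q h t\<bar> \<le> (L / 2 * (norm h)^2) * t" if st: "0 < s" "s \<le> t" for h s t
  proof -
    have t: "t > 0" using st by linarith
    define \<mu> where "\<mu> = s / t"
    have \<mu>: "0 \<le> \<mu>" "\<mu> \<le> 1" using st t by (auto simp: \<mu>_def)
    have \<mu>t: "\<mu> * t = s" using t by (simp add: \<mu>_def)
    have pt: "\<mu> *\<^sub>R (x + t *\<^sub>R h) + (1 - \<mu>) *\<^sub>R x = x + s *\<^sub>R h"
      using \<mu>t by (simp add: algebra_simps)
    have nab: "(norm ((x + t *\<^sub>R h) - x))^2 = t^2 * (norm h)^2"
      using t by (simp add: power_mult_distrib)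
    define E where "E = \<phi> (x + s *\<^sub>R h) - \<phi> x - \<mu> * (\<phi> (x + t *\<^sub>R h) - \<phi> x)"
    have E: "\<bar>E\<bar> \<le> L / 2 * (\<mu> * (1 - \<mu>) * (t^2 * (norm h)^2))"
      using two[OF \<mu>, of "x + t *\<^sub>R h" x] unfolding pt nab E_def by (simp add: algebra_simps)
    have "\<mu> * (1 - \<mu>) * t^2 = s * (t - s)"
      using t by (simp add: \<mu>_def power2_eq_square field_simps)
    moreover have "L / 2 * (\<mu> * (1 - \<mu>) * (t^2 * (norm h)^2)) = (L / 2 * (norm h)^2) * (\<mu> * (1 - \<mu>) * t^2)"
      by (simp only: mult_ac)
    ultimately have eqL: "L / 2 * (\<mu> * (1 - \<mu>) * (t^2 * (norm h)^2)) = s * (L / 2 * (norm h)^2 * (t - s))"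
      by (simp only: mult_ac)
    have E2: "\<bar>E\<bar> \<le> s * (L / 2 * (norm h)^2 * (t - s))"
      using E eqL by linarith
    have "q h s - q h t = E / s"
      using st t unfolding q_def E_def \<mu>_def by (simp add: field_simps)
    then have "\<bar>q h s - q h t\<bar> = \<bar>E\<bar> / s" using st by simp
    also have "\<dots> \<le> L / 2 * (norm h)^2 * (t - s)"
      using E2 st by (simp add: divide_le_eq mult.commute)
    also have "\<dots> \<le> L / 2 * (norm h)^2 * t"
      using st L by (intro mult_left_mono) auto
    finally show ?thesis .
  qed
  have "\<exists>l. \<forall>t>0. \<bar>l - q h t\<bar> \<le> (L / 2 * (norm h)^2) * t" for h
    using L by (intro limit_lemma qA) auto
  then obtain D where D: "\<And>h t. t > 0 \<Longrightarrow> \<bar>D h - q h t\<bar> \<le> (L / 2 * (norm h)^2) * t"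
    by metis
  have D0: "D 0 = 0"
  proof -
    have "\<bar>D 0 - q 0 1\<bar> \<le> 0" using D[of 1 0] by simp
    then show ?thesis by (simp add: q_def)
  qed
  have Dpos: "D (c *\<^sub>R h) = c * D h" if c: "c > 0" for c h
  proof -
    have "\<bar>D (c *\<^sub>R h) - c * D h\<bar> \<le> (L * c^2 * (norm h)^2) * t" if t: "t > 0" for t
    proof -
      have qc: "q (c *\<^sub>R h) t = c * q h (c * t)"
        using c t by (simp add: q_def field_simps)
      have 1: "\<bar>D (c *\<^sub>R h) - q (c *\<^sub>R h) t\<bar> \<le> (L / 2 * (norm (c *\<^sub>R h))^2) * t" using D t by blast
      have "\<bar>D h - q h (c * t)\<bar> \<le> (L / 2 * (norm h)^2) * (c * t)" using D c t by simp
      then have 2: "\<bar>c * D h - c * q h (c * t)\<bar> \<le> c * ((L / 2 * (norm h)^2) * (c * t))"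
        using c by (simp add: abs_mult right_diff_distrib[symmetric])
      have n: "(norm (c *\<^sub>R h))^2 = c^2 * (norm h)^2" using c by (simp add: power_mult_distrib)
      have "\<bar>D (c *\<^sub>R h) - c * D h\<bar> \<le> \<bar>D (c *\<^sub>R h) - q (c *\<^sub>R h) t\<bar> + \<bar>c * D h - c * q h (c * t)\<bar>"
        unfolding qc by linarith
      also have "\<dots> \<le> (L / 2 * (c^2 * (norm h)^2)) * t + c * ((L / 2 * (norm h)^2) * (c * t))"
        using 1 2 n by simp
      also have "\<dots> = (L * c^2 * (norm h)^2) * t" by (simp add: power2_eq_square algebra_simps)
      finally show ?thesis .
    qed
    then have "D (c *\<^sub>R h) - c * D h = 0" by (rule zero_if_small)
    then show ?thesis by simp
  qed
  have Dadd: "D (h + k) = D h + D k" for h k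
  proof -
    have "\<bar>D (h + k) - D h - D k\<bar> \<le> (L / 2 * (norm (h + k))^2 + L / 2 * (norm (h - k))^2
          + L * (norm h)^2 + L * (norm k)^2) * t" if t: "t > 0" for t
    proof -
      have pt: "(1/2) *\<^sub>R (x + (2*t) *\<^sub>R h) + (1 - 1/2) *\<^sub>R (x + (2*t) *\<^sub>R k) = x + t *\<^sub>R (h + k)"
        by (simp add: algebra_simps flip: scaleR_add_left)
      have nab: "(norm ((x + (2*t) *\<^sub>R h) - (x + (2*t) *\<^sub>R k)))^2 = 4 * t^2 * (norm (h - k))^2"
      proof -
        have "(x + (2*t) *\<^sub>R h) - (x + (2*t) *\<^sub>R k) = (2*t) *\<^sub>R (h - k)" by (simp add: algebra_simps)
        then show ?thesis using t by (simp add: power_mult_distrib)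
      qed
      define M where "M = \<phi> (x + t *\<^sub>R (h + k)) - (1/2) * \<phi> (x + (2*t) *\<^sub>R h) - (1/2) * \<phi> (x + (2*t) *\<^sub>R k)"
      have M: "\<bar>M\<bar> \<le> L / 2 * (norm (h - k))^2 * t^2"
        using two[of "1/2" "x + (2*t) *\<^sub>R h" "x + (2*t) *\<^sub>R k"] unfolding pt nab M_def
        by (simp add: algebra_simps)
      have qq: "q (h + k) t - q h (2*t) - q k (2*t) = M / t"
        using t unfolding q_def M_def by (simp add: field_simps)
      have f2: "\<bar>M / t\<bar> \<le> L / 2 * (norm (h - k))^2 * t"
        using M t by (simp add: divide_le_eq power2_eq_square algebra_simps)
      have f1: "\<bar>D (h + k) - q (h + k) t\<bar> \<le> L / 2 * (norm (h + k))^2 * t" using D t by blast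
      have f3: "\<bar>D h - q h (2*t)\<bar> \<le> L * (norm h)^2 * t" using D[where t="2*t" and h=h] t by simp
      have f4: "\<bar>D k - q k (2*t)\<bar> \<le> L * (norm k)^2 * t" using D[where t="2*t" and h=k] t by simp
      have "\<bar>D (h + k) - D h - D k\<bar> \<le> L / 2 * (norm (h + k))^2 * t + L / 2 * (norm (h - k))^2 * t
          + L * (norm h)^2 * t + L * (norm k)^2 * t"
        using f1 f2 f3 f4 qq unfolding abs_le_iff by linarith
      then show ?thesis by (simp add: algebra_simps)
    qed
    then have "D (h + k) - D h - D k = 0" by (rule zero_if_small)
    then show ?thesis by simp
  qed
  have Dneg: "D (- h) = - D h" for h
    using Dadd[of h "- h"] D0 by simp
  have Dscale: "D (c *\<^sub>R h) = c * D h" for c h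
  proof (cases "c > 0")
    case True then show ?thesis by (rule Dpos)
  next
    case False
    show ?thesis
    proof (cases "c = 0")
      case True then show ?thesis using D0 by simp
    next
      case False
      then have "- c > 0" using \<open>\<not> c > 0\<close> by simp
      have "D (c *\<^sub>R h) = D (- ((- c) *\<^sub>R h))" by simp
      also have "\<dots> = - ((- c) * D h)" using Dneg Dpos[OF \<open>- c > 0\<close>] by simp
      finally show ?thesis by simp
    qed
  qed
  have D1: "\<bar>D h - (\<phi> (x + h) - \<phi> x)\<bar> \<le> L / 2 * (norm h)^2" for h
    using D[of 1 h] by (simp add: q_def)
  obtain \<delta> where \<delta>: "\<delta> > 0" "\<And>y. dist y x < \<delta> \<Longrightarrow> dist (\<phi> y) (\<phi> x) < 1"
    using cont unfolding continuous_on_iff by (metis UNIV_I zero_less_one)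
  define K where "K = (2 / \<delta>) * (1 + L / 2 * (\<delta> / 2)^2)"
  have Kb: "\<bar>D h\<bar> \<le> norm h * K" for h
  proof (cases "h = 0")
    case True then show ?thesis using D0 by simp
  next
    case False
    then have nh: "norm h > 0" by simp
    define u where "u = (\<delta> / (2 * norm h)) *\<^sub>R h"
    have nu: "norm u = \<delta> / 2" using nh \<delta>(1) by (simp add: u_def)
    have "dist (x + u) x < \<delta>" using nu \<delta>(1) by (simp add: dist_norm)
    then have "\<bar>\<phi> (x + u) - \<phi> x\<bar> < 1" using \<delta>(2) by (simp add: dist_real_def)
    then have Du: "\<bar>D u\<bar> \<le> 1 + L / 2 * (\<delta> / 2)^2" using D1[of u] unfolding nu by linarith
    have hu: "h = (2 * norm h / \<delta>) *\<^sub>R u" using nh \<delta>(1) by (simp add: u_def)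
    have "\<bar>D h\<bar> = (2 * norm h / \<delta>) * \<bar>D u\<bar>"
      using nh \<delta>(1) by (subst hu, simp only: Dscale abs_mult) simp
    also have "\<dots> \<le> (2 * norm h / \<delta>) * (1 + L / 2 * (\<delta> / 2)^2)"
      using Du nh \<delta>(1) by (intro mult_left_mono) auto
    also have "\<dots> = norm h * K" by (simp add: K_def)
    finally show ?thesis .
  qed
  have "bounded_linear D"
    by (rule bounded_linear_intro[where K = K]) (use Dadd Dscale Kb in auto)
  then obtain v where v: "\<And>h. D h = v \<bullet> h" using riesz by blast
  show ?thesis
  proof (intro exI allI)
    fix h
    show "\<bar>\<phi> (x + h) - \<phi> x - v \<bullet> h\<bar> \<le> L / 2 * (norm h)^2"
      using D1[of h] unfolding v by linarith
  qed
qed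


theorem lemma2p2:
  fixes F :: "'a::{real_inner, complete_space} \<Rightarrow> 'b::banach"
    and L :: real
  assumes contF: "continuous_on UNIV F"
    and Lpos: "L > 0"
    and approx: "\<And>(n::nat) (x::nat \<Rightarrow> 'a) (lam::nat \<Rightarrow> real).
        n \<ge> 1 \<Longrightarrow> (\<forall>i\<in>{1..n}. lam i \<ge> 0) \<Longrightarrow> (\<Sum>i=1..n. lam i) = 1 \<Longrightarrow>
        norm (F (\<Sum>i=1..n. lam i *\<^sub>R x i) - (\<Sum>i=1..n. lam i *\<^sub>R F (x i)))
          \<le> L / 2 * (\<Sum>i=1..n. \<Sum>j\<in>{i<..n}. lam i * lam j * (norm (x i - x j))\<^sup>2)"
  shows "\<forall>ystar :: 'b \<Rightarrow>\<^sub>L real. norm ystar \<le> 1 \<longrightarrow>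
    (\<exists>grad :: 'a \<Rightarrow> 'a.
       (\<forall>x. ((\<lambda>z. blinfun_apply ystar (F z)) has_derivative (\<lambda>h. grad x \<bullet> h)) (at x))
       \<and> L-lipschitz_on UNIV grad)"
proof (intro allI impI)
  fix ystar :: "'b \<Rightarrow>\<^sub>L real" assume ny: "norm ystar \<le> 1"
  define \<phi> where "\<phi> = (\<lambda>z. blinfun_apply ystar (F z))"
  have cont\<phi>: "continuous_on UNIV \<phi>" unfolding \<phi>_def by (intro continuous_intros contF)
  have twoF: "norm (F (\<mu> *\<^sub>R a + (1 - \<mu>) *\<^sub>R b) - (\<mu> *\<^sub>R F a + (1 - \<mu>) *\<^sub>R F b))
      \<le> L / 2 * (\<mu> * (1 - \<mu>) * (norm (a - b))^2)" if \<mu>: "0 \<le> \<mu>" "\<mu> \<le> 1" for a b \<mu>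
  proof -
    have s1: "{1..2::nat} = {1, 2}" by auto
    have s2: "{1<..2::nat} = {2}" by auto
    have s3: "{2<..2::nat} = {}" by auto
    show ?thesis
      using approx[where n=2 and x="\<lambda>i. if i = 1 then a else b" and lam="\<lambda>i. if i = 1 then \<mu> else 1 - \<mu>"] \<mu>
      unfolding s1 s2 s3 by simp
  qed
  have two: "\<bar>\<phi> (\<mu> *\<^sub>R a + (1 - \<mu>) *\<^sub>R b) - \<mu> * \<phi> a - (1 - \<mu>) * \<phi> b\<bar>
      \<le> L / 2 * (\<mu> * (1 - \<mu>) * (norm (a - b))^2)" if \<mu>: "0 \<le> \<mu>" "\<mu> \<le> 1" for a b \<mu>
  proof -
    let ?v = "F (\<mu> *\<^sub>R a + (1 - \<mu>) *\<^sub>R b) - (\<mu> *\<^sub>R F a + (1 - \<mu>) *\<^sub>R F b)"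
    have "\<phi> (\<mu> *\<^sub>R a + (1 - \<mu>) *\<^sub>R b) - \<mu> * \<phi> a - (1 - \<mu>) * \<phi> b = blinfun_apply ystar ?v"
      unfolding \<phi>_def by (simp add: blinfun.diff_right blinfun.add_right blinfun.scaleR_right)
    moreover have "\<bar>blinfun_apply ystar ?v\<bar> \<le> norm ystar * norm ?v"
      using norm_blinfun[of ystar ?v] by simp
    moreover have "norm ystar * norm ?v \<le> norm ?v"
      using ny by (simp add: mult_left_le_one_le)
    ultimately show ?thesis using twoF[OF \<mu>, of a b] by linarith
  qed
  have "\<forall>x. \<exists>v. \<forall>h. \<bar>\<phi> (x + h) - \<phi> x - v \<bullet> h\<bar> \<le> L / 2 * (norm h)^2"
    using deriv_exists[OF cont\<phi> Lpos two] by blast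
  then obtain grad where grad: "\<And>x h. \<bar>\<phi> (x + h) - \<phi> x - grad x \<bullet> h\<bar> \<le> L / 2 * (norm h)^2"
    by metis
  show "\<exists>grad :: 'a \<Rightarrow> 'a.
       (\<forall>x. ((\<lambda>z. blinfun_apply ystar (F z)) has_derivative (\<lambda>h. grad x \<bullet> h)) (at x))
       \<and> L-lipschitz_on UNIV grad"
  proof (intro exI conjI allI)
    fix x
    show "((\<lambda>z. blinfun_apply ystar (F z)) has_derivative (\<lambda>h. grad x \<bullet> h)) (at x)"
      unfolding has_derivative_at_alt \<phi>_def[symmetric]
    proof (intro conjI allI impI)
      show "bounded_linear (\<lambda>h. grad x \<bullet> h)" by (rule bounded_linear_inner_right)
      fix e :: real assume e: "e > 0"
      show "\<exists>d>0. \<forall>y. norm (y - x) < d \<longrightarrow> norm (\<phi> y - \<phi> x - grad x \<bullet> (y - x)) \<le> e * norm (y - x)"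
      proof (intro exI conjI allI impI)
        show "2 * e / L > 0" using e Lpos by simp
        fix y assume y: "norm (y - x) < 2 * e / L"
        have "norm (\<phi> y - \<phi> x - grad x \<bullet> (y - x)) \<le> L / 2 * (norm (y - x))^2"
          using grad[of x "y - x"] by simp
        also have "\<dots> = (L / 2 * norm (y - x)) * norm (y - x)" by (simp add: power2_eq_square)
        also have "\<dots> \<le> e * norm (y - x)"
        proof (rule mult_right_mono)
          show "L / 2 * norm (y - x) \<le> e" using y Lpos by (simp add: field_simps)
        qed simp
        finally show "norm (\<phi> y - \<phi> x - grad x \<bullet> (y - x)) \<le> e * norm (y - x)" .
      qed
    qed
  next
    show "L-lipschitz_on UNIV grad"
    proof (rule lipschitz_onI)
      fix x y :: 'a
      show "dist (grad x) (grad y) \<le> L * dist x y"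
        using lip_from_quad[of \<phi> grad L y x, OF grad Lpos] by (metis dist_norm norm_minus_commute)
    qed (use Lpos in simp)
  qed
qed

end
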